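(* Let $a,b,d>0$, let $c_-$ be the unique negative zero of $Q(x)=4ax^3-b^2x^2-18abd\,x+27a^2d^2+4db^3$, let $c^*=-\sqrt{3bd}$, and assume $c\in(c_-,c^* )$. Let $\phi(x)=\frac{ax^3+bx^2+cx+d}{x^3}$ ($x>0$), $x_m=\frac{-c-\sqrt{c^2-3bd}}{b}$, $x_M=\frac{-c+\sqrt{c^2-3bd}}{b}$, and $c_1^*=-2\sqrt{bd}$. \begin{description} \item[(a)] $c_-<c_1^*$. \item[(b)] $\phi(x_m)>a$ if and only if $c>c_1^*$. \item[(c)] Suppose $c>c_1^*$. Then there exists a unique number $\eta>x_M$ such that $\phi(\eta)=\phi(x_m)$, and $$\eta=\frac{-dx_m}{cx_m+2d}.$$ \end{description}
   Context: $x_m<x_M$ are the local minimum and local maximum points of $\phi$ on $(0,\infty)$. *)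

theory Defs
  imports Complex_Main
begin

definition Qpoly :: "real \<Rightarrow> real \<Rightarrow> real \<Rightarrow> real \<Rightarrow> real" where
  "Qpoly a b d x = 4*a*x^3 - b^2*x^2 - 18*a*b*d*x + 27*a^2*d^2 + 4*d*b^3"

definition phi :: "real \<Rightarrow> real \<Rightarrow> real \<Rightarrow> real \<Rightarrow> real \<Rightarrow> real" where
  "phi a b c d x = (a*x^3 + b*x^2 + c*x + d) / x^3"

end

theory Submission
  imports Defs "HOL-Real_Asymp.Real_Asymp"
begin

lemma key:
  fixes a b C s d t :: real
  assumes "d > 0" "3*d*b = C^2 - s^2"
  shows "(a + b*t + (-C)*t^2 + d*t^3) - (a + b*((C+s)/(3*d)) + (-C)*((C+s)/(3*d))^2 + d*((C+s)/(3*d))^3)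
        = d*(t - (C+s)/(3*d))^2 * (t - (C-2*s)/(3*d))"
proof -
  have hb: "b = (C^2 - s^2)/(3*d)" using assms by (simp add: field_simps)
  show ?thesis unfolding hb using assms(1) by (simp add: field_simps) algebra
qed

lemma phi_inv:
  fixes x :: real assumes "x \<noteq> 0"
  shows "phi a b c d x = a + b*(1/x) + c*(1/x)^2 + d*(1/x)^3"
  using assms unfolding phi_def by (simp add: field_simps power2_eq_square power3_eq_cube)

lemma part_a:
  fixes a b d cm :: real
  assumes "a > 0" and "b > 0" and "d > 0"
    and "cm < 0" and "Qpoly a b d cm = 0"
    and "\<And>y. y < 0 \<Longrightarrow> Qpoly a b d y = 0 \<Longrightarrow> y = cm"
  shows "cm < - 2 * sqrt (b*d)"
proof -
  define u where "u = sqrt (b*d)"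
  have u0: "u > 0" using assms u_def by simp
  have uu: "u^2 = b*d" using assms u_def by simp
  have "Qpoly a b d (-2*u) = 4*a*b*d*u + 27*a^2*d^2"
  proof -
    have "Qpoly a b d (-2*u) = -32*a*(u^2)*u - 4*b^2*u^2 + 36*a*b*d*u + 27*a^2*d^2 + 4*d*b^3"
      unfolding Qpoly_def by (simp add: power2_eq_square power3_eq_cube algebra_simps)
    also have "\<dots> = 4*a*b*d*u + 27*a^2*d^2" unfolding uu by (simp add: algebra_simps power2_eq_square power3_eq_cube)
    finally show ?thesis .
  qed
  also have "\<dots> > 0" using assms u0 by (simp add: add_pos_pos)
  finally have Qc1: "Qpoly a b d (-2*u) > 0" .
  have lim: "filterlim (\<lambda>y. Qpoly a b d y) at_bot at_bot"
    using assms(1) unfolding Qpoly_def by real_asymp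
  then have e1: "eventually (\<lambda>y. Qpoly a b d y \<le> 0) at_bot"
    by (simp add: filterlim_at_bot)
  have e2: "eventually (\<lambda>y. y \<le> -2*u) at_bot" by (rule eventually_le_at_bot)
  obtain y0 where y0: "Qpoly a b d y0 \<le> 0" "y0 \<le> -2*u"
  proof -
    have "eventually (\<lambda>y. Qpoly a b d y \<le> 0 \<and> y \<le> -2*u) at_bot" using e1 e2 by (rule eventually_conj)
    then obtain N where "\<And>y. y \<le> N \<Longrightarrow> Qpoly a b d y \<le> 0 \<and> y \<le> -2*u" by (auto simp: eventually_at_bot_linorder)
    then show ?thesis using that by blast
  qed
  have cont: "\<forall>x. y0 \<le> x \<and> x \<le> -2*u \<longrightarrow> isCont (Qpoly a b d) x"
    unfolding Qpoly_def by (intro allI impI) (rule continuous_intros)+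
  obtain x where x: "y0 \<le> x" "x \<le> -2*u" "Qpoly a b d x = 0"
    using IVT[of "Qpoly a b d" y0 0 "-2*u"] y0 Qc1 cont by auto
  have "x \<noteq> -2*u" using x Qc1 by auto
  hence "x < -2*u" using x by simp
  moreover have "x = cm" using assms(6)[of x] x u0 by simp
  ultimately show ?thesis unfolding u_def by simp
qed

lemma sqlt: "0 \<le> (x::real) \<Longrightarrow> 0 \<le> y \<Longrightarrow> x < y \<longleftrightarrow> x^2 < y^2"
  using power_strict_mono[of x y 2] power_less_imp_less_base[of x 2 y] by auto

theorem lemma3:
  fixes a b c d cm :: real
  assumes "a > 0" and "b > 0" and "d > 0"
    and "cm < 0" and "Qpoly a b d cm = 0"
    and "\<And>y. y < 0 \<Longrightarrow> Qpoly a b d y = 0 \<Longrightarrow> y = cm"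
    and "cm < c" and "c < - sqrt (3*b*d)"
  defines "xm \<equiv> (- c - sqrt (c^2 - 3*b*d)) / b"
    and "xM \<equiv> (- c + sqrt (c^2 - 3*b*d)) / b"
    and "c1 \<equiv> - 2 * sqrt (b*d)"
  shows "cm < c1
    \<and> (phi a b c d xm > a \<longleftrightarrow> c > c1)
    \<and> (c > c1 \<longrightarrow>
          (\<exists>!\<eta>. \<eta> > xM \<and> phi a b c d \<eta> = phi a b c d xm)
        \<and> (let \<eta> = (- d * xm) / (c * xm + 2*d) in \<eta> > xM \<and> phi a b c d \<eta> = phi a b c d xm))"
proof -
  have A: "cm < c1" unfolding c1_def using part_a[OF assms(1-6)] by simp
  define C where "C = -c"
  define s where "s = sqrt (c^2 - 3*b*d)"
  define u where "u = sqrt (b*d)"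
  have bd: "b*d > 0" using assms(2,3) by simp
  have u0: "u > 0" and uu: "u^2 = b*d" using bd u_def by auto
  have sq3: "sqrt (3*b*d) > 0" using bd by simp
  have C0: "C > 0" using assms(8) sq3 C_def by linarith
  have "sqrt (3*b*d) < sqrt (C^2)" using assms(8) C0 C_def by simp
  hence C3: "3*b*d < C^2" by (simp only: real_sqrt_less_iff)
  have cc: "c^2 = C^2" using C_def by simp
  have ss: "s^2 = C^2 - 3*b*d" using C3 s_def cc by simp
  have s0: "s > 0" using C3 s_def cc by simp
  have sC: "s < C"
  proof -
    have "s^2 < C^2" using ss bd by simp
    thus ?thesis using C0 s0 by (smt (verit) power_mono)
  qed
  have hb: "3*d*b = C^2 - s^2" using ss by simp
  have Cs: "C^2 - s^2 = (C-s)*(C+s)" by (simp add: power2_eq_square algebra_simps)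
  have xm: "xm = 3*d/(C+s)"
  proof -
    have "xm = (C - s)/b" unfolding xm_def C_def s_def by simp
    also have "\<dots> = 3*d/(C+s)" using assms(2) C0 s0 hb Cs
      by (simp add: field_simps)
    finally show ?thesis .
  qed
  have xM: "xM = 3*d/(C-s)"
  proof -
    have "xM = (C + s)/b" unfolding xM_def C_def s_def by simp
    also have "\<dots> = 3*d/(C-s)" using assms(2) C0 s0 sC hb Cs
      by (simp add: field_simps)
    finally show ?thesis .
  qed
  define tm where "tm = (C+s)/(3*d)"
  define tM where "tM = (C-s)/(3*d)"
  define r where "r = (C-2*s)/(3*d)"
  have tm0: "tm > 0" using C0 s0 assms(3) tm_def by simp
  have tM0: "tM > 0" using sC assms(3) tM_def by simp
  have xmt: "1/xm = tm" unfolding xm tm_def by simp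
  have xMt: "1/xM = tM" unfolding xM tM_def by simp
  have xm0: "xm > 0" using xm C0 s0 assms(3) by simp
  have xM0: "xM > 0" using xM sC assms(3) by simp
  define psi where "psi t = a + b*t + (-C)*t^2 + d*t^3" for t
  have phipsi: "phi a b c d x = psi (1/x)" if "x \<noteq> 0" for x
    using phi_inv[OF that] unfolding psi_def C_def by simp
  have fac: "psi t - psi tm = d*(t - tm)^2*(t - r)" for t
    unfolding psi_def tm_def r_def using key[OF assms(3) hb] by simp
  have cc1: "c > c1 \<longleftrightarrow> 2*s < C"
  proof -
    have "c > c1 \<longleftrightarrow> C < 2*u" unfolding c1_def C_def u_def by linarith
    also have "\<dots> \<longleftrightarrow> C^2 < (2*u)^2" using C0 u0
      by (intro sqlt) auto
    also have "\<dots> \<longleftrightarrow> C^2 < 4*(b*d)" unfolding uu[symmetric] by (simp add: power_mult_distrib)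
    also have "\<dots> \<longleftrightarrow> (2*s)^2 < C^2" using ss by (simp add: power_mult_distrib)
    also have "\<dots> \<longleftrightarrow> 2*s < C" using C0 s0
      by (intro sqlt[symmetric]) auto
    finally show ?thesis .
  qed
  have B: "phi a b c d xm > a \<longleftrightarrow> c > c1"
  proof -
    have "phi a b c d xm = psi tm" using phipsi xm0 xmt by simp
    also have "psi tm = a + tm*(b + (-C)*tm + d*tm^2)" unfolding psi_def
      by (simp add: power2_eq_square power3_eq_cube algebra_simps)
    finally have e: "phi a b c d xm > a \<longleftrightarrow> b + (-C)*tm + d*tm^2 > 0" using tm0
      by (simp add: zero_less_mult_iff)
    have "b + (-C)*tm + d*tm^2 = (C-2*s)*(C+s)/(9*d)"
    proof -
      have hb2: "b = (C^2 - s^2)/(3*d)" using hb assms(3) by (simp add: field_simps)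
      show ?thesis unfolding tm_def hb2 using assms(3)
        by (simp add: field_simps power2_eq_square)
    qed
    hence "phi a b c d xm > a \<longleftrightarrow> (C-2*s)*(C+s)/(9*d) > 0" using e by simp
    also have "\<dots> \<longleftrightarrow> 2*s < C" using C0 s0 assms(3)
      by (simp add: zero_less_divide_iff zero_less_mult_iff)
    finally show ?thesis using cc1 by simp
  qed
  have Cpart: "(\<exists>!\<eta>. \<eta> > xM \<and> phi a b c d \<eta> = phi a b c d xm)
        \<and> (let \<eta> = (- d * xm) / (c * xm + 2*d) in \<eta> > xM \<and> phi a b c d \<eta> = phi a b c d xm)"
    if h: "c > c1"
  proof -
    have s2: "2*s < C" using h cc1 by simp
    have r0: "r > 0" using s2 assms(3) r_def by simp
    have rM: "r < tM" using s0 assms(3) r_def tM_def by (simp add: divide_strict_right_mono)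
    have eta: "(- d * xm) / (c * xm + 2*d) = 1/r"
    proof -
      have cC: "c = -C" using C_def by simp
      have den: "c * xm + 2*d = d*(2*s - C)/(C+s)" unfolding cC xm using C0 s0 by (simp add: field_simps)
      have dn: "d*(2*s - C) \<noteq> 0" using s2 assms(3) by simp
      have num: "- d * xm = -3*d*d/(C+s)" unfolding xm by simp
      have cs: "C + s \<noteq> 0" using C0 s0 by simp
      have "(- d * xm) / (c * xm + 2*d) = (-3*d*d) / (d*(2*s - C))"
        unfolding num den using cs by simp
      also have "\<dots> = 3*d/(C-2*s)" using dn assms(3) by (simp add: field_simps)
      also have "\<dots> = 1/r" unfolding r_def by simp
      finally show ?thesis .
    qed
    have pm: "phi a b c d xm = psi tm" using phipsi xm0 xmt by simp
    have xMi: "xM = inverse tM" unfolding xMt[symmetric] by simp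
    have tMm: "tM < tm" using s0 assms(3) tM_def tm_def by (simp add: divide_strict_right_mono)
    have g1: "1/r > xM" unfolding xMi inverse_eq_divide[symmetric] using less_imp_inverse_less[OF rM r0] .
    have g2: "phi a b c d (1/r) = phi a b c d xm"
    proof -
      have "phi a b c d (1/r) = psi r" using phipsi[of "1/r"] r0 by simp
      also have "\<dots> = psi tm" using fac[of r] by simp
      finally show ?thesis using pm by simp
    qed
    have uniq: "\<eta> = 1/r" if e: "\<eta> > xM" "phi a b c d \<eta> = phi a b c d xm" for \<eta>
    proof -
      have e0: "\<eta> > 0" using e xM0 by simp
      define t where "t = 1/\<eta>"
      have t0: "t > 0" using e0 t_def by simp
      have "t < tM" unfolding t_def xMt[symmetric] using e(1) xM0 by (simp add: frac_less2)
      hence tn: "t \<noteq> tm" using tMm by simp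
      have "psi t = psi tm" using e(2) pm phipsi[of \<eta>] e0 t_def by simp
      hence "d*(t - tm)^2*(t - r) = 0" using fac[of t] by simp
      hence "t = r" using tn assms(3) by simp
      thus ?thesis using t_def e0 by (metis div_by_1 divide_divide_eq_right mult_1)
    qed
    show ?thesis unfolding Let_def eta using g1 g2 uniq by blast
  qed
  show ?thesis using A B Cpart by blast
qed

end
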